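(* Let $\varepsilon>0$, $\alpha=\varepsilon/(2M)$, $\eta=\alpha/(L+\alpha)$, and $z_0\in\mathrm{dom}\, f^*$. Run GCG: for $k\ge0$, $\bar z_k=\mathrm{argmin}_{v\in\mathbb{R}^n}\{\langle-\nabla(h^\alpha)^*(-z_k),v\rangle+f^*(v)\}$ and $z_{k+1}=\eta\bar z_k+(1-\eta)z_k$. Let $\Gamma_k^*(v)=(h^\alpha)^*(-z_k)+\langle-\nabla(h^\alpha)^*(-z_k),v-z_k\rangle+f^*(v)$ be the single-cutting-plane model of the dual problem induced by $z_k$. Then the pair $(z_k,\Gamma_k^* )$ is an $\varepsilon$-certificate, i.e., $\psi^\alpha(z_k)-\min_{v\in\mathbb{R}^n}\Gamma_k^*(v)\le\varepsilon/2$, after $k=\tilde{\mathcal{O}}(1+ML\varepsilon^{-1})$ iterations.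
   Context: Let $\|\cdot\|$ be a norm on $\mathbb{R}^n$ with dual norm $\|\cdot\|_*$. Let $f:\mathbb{R}^n\to\mathbb{R}$ be convex, differentiable and $L$-smooth ($L>0$) with respect to $\|\cdot\|$, $h:\mathbb{R}^n\to(-\infty,\infty]$ closed proper convex with bounded domain, and $w:\mathbb{R}^n\to[0,+\infty]$ closed, $1$-strongly convex with respect to $\|\cdot\|$ on $\mathrm{dom}\, h$, with $M:=\max_{x\in\mathrm{dom}\, h}w(x)<\infty$. Let $h^\alpha=h+\alpha w$ and $\psi^\alpha(z)=(h^\alpha)^*(-z)+f^*(z)$, where $^*$ denotes convex conjugate ($(h^\alpha)^*$ is differentiable with $(1/\alpha)$-Lipschitz gradient, $f^*$ is $(1/L)$-strongly convex w.r.t. $\|\cdot\|_*$). The dual problem is $\min_z\psi^\alpha(z)$, and it is Fenchel dual to $\min_x f(x)+h^\alpha(x)$; a dual $\varepsilon$-certificate (with $\alpha\le\varepsilon/(2M)$) is a pair $(z,\Gamma^* )$ with $\psi^\alpha(z)-\min\Gamma^*\le\varepsilon/2$. The notation $\tilde{\mathcal{O}}$ hides logarithmic factors (in $\varepsilon$ and initial gaps). *)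

theory Defs
  imports "HOL-Analysis.Analysis"
begin

definition is_norm :: "(real^'n \<Rightarrow> real) \<Rightarrow> bool" where
  "is_norm N \<longleftrightarrow> (\<forall>x. 0 \<le> N x) \<and> (\<forall>x. N x = 0 \<longleftrightarrow> x = 0)
     \<and> (\<forall>c x. N (c *\<^sub>R x) = \<bar>c\<bar> * N x) \<and> (\<forall>x y. N (x + y) \<le> N x + N y)"

definition dual_norm :: "(real^'n \<Rightarrow> real) \<Rightarrow> real^'n \<Rightarrow> real" where
  "dual_norm N y = Sup {y \<bullet> x | x. N x \<le> 1}"

definition edom :: "(real^'n \<Rightarrow> ereal) \<Rightarrow> (real^'n) set" where
  "edom F = {x. F x < \<infinity>}"

definition conj :: "(real^'n \<Rightarrow> ereal) \<Rightarrow> real^'n \<Rightarrow> ereal" where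
  "conj F y = (SUP x. ereal (y \<bullet> x) - F x)"

definition epi :: "(real^'n \<Rightarrow> ereal) \<Rightarrow> ((real^'n) \<times> real) set" where
  "epi F = {(x, t). F x \<le> ereal t}"

definition econvex :: "(real^'n \<Rightarrow> ereal) \<Rightarrow> bool" where
  "econvex F \<longleftrightarrow> convex (epi F)"

definition eclosed :: "(real^'n \<Rightarrow> ereal) \<Rightarrow> bool" where
  "eclosed F \<longleftrightarrow> closed (epi F)"

definition eproper :: "(real^'n \<Rightarrow> ereal) \<Rightarrow> bool" where
  "eproper F \<longleftrightarrow> (\<forall>x. F x \<noteq> -\<infinity>) \<and> (\<exists>x. F x < \<infinity>)"

definition grad :: "(real^'n \<Rightarrow> real) \<Rightarrow> real^'n \<Rightarrow> real^'n" where
  "grad F x = (SOME g. (F has_derivative (\<lambda>d. g \<bullet> d)) (at x))"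

definition strongly_convex_on :: "(real^'n \<Rightarrow> real) \<Rightarrow> real \<Rightarrow> (real^'n) set \<Rightarrow> (real^'n \<Rightarrow> ereal) \<Rightarrow> bool" where
  "strongly_convex_on N \<mu> S F \<longleftrightarrow> convex S \<and>
     (\<forall>x\<in>S. \<forall>y\<in>S. \<forall>t::real. 0 \<le> t \<and> t \<le> 1 \<longrightarrow>
        F (t *\<^sub>R x + (1 - t) *\<^sub>R y) \<le>
          ereal t * F x + ereal (1 - t) * F y - ereal (\<mu> / 2 * t * (1 - t) * (N (x - y))\<^sup>2))"

end

theory Submission
  imports Defs
begin



lemma norm_basic:
  fixes N :: "real^'n \<Rightarrow> real"
  assumes "is_norm N"
  shows "N 0 = 0" "N (- x) = N x" "N (x - y) = N (y - x)" "N (c *\<^sub>R x) = \<bar>c\<bar> * N x"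
    "N (x + y) \<le> N x + N y" "0 \<le> N x" "N x = 0 \<longleftrightarrow> x = 0"
proof -
  have *: "\<And>c x. N (c *\<^sub>R x) = \<bar>c\<bar> * N x" using assms unfolding is_norm_def by blast
  show "N 0 = 0" using assms unfolding is_norm_def by blast
  show "N (- x) = N x" using *[of "-1" x] by simp
  show "N (x - y) = N (y - x)" using *[of "-1" "x - y"] by simp
  show "N (c *\<^sub>R x) = \<bar>c\<bar> * N x" by (rule *)
  show "N (x + y) \<le> N x + N y" "0 \<le> N x" "N x = 0 \<longleftrightarrow> x = 0" using assms unfolding is_norm_def by blast+
qed

lemma norm_sum_le:
  fixes N :: "real^'n \<Rightarrow> real"
  assumes "is_norm N" "finite S"
  shows "N (\<Sum>i\<in>S. g i) \<le> (\<Sum>i\<in>S. N (g i))"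
  using assms(2)
proof (induction S rule: finite_induct)
  case empty then show ?case using norm_basic(1)[OF assms(1)] by simp
next
  case (insert a S)
  then show ?case using norm_basic(5)[OF assms(1), of "g a" "sum g S"] by simp
qed

lemma norm_upper:
  fixes N :: "real^'n \<Rightarrow> real"
  assumes "is_norm N"
  shows "\<exists>K>0. \<forall>x. N x \<le> K * norm x"
proof -
  define K where "K = 1 + (\<Sum>b\<in>Basis. N b)"
  have K0: "K > 0" unfolding K_def using norm_basic(6)[OF assms] by (simp add: add_pos_nonneg sum_nonneg)
  have "N x \<le> K * norm x" for x
  proof -
    have "N x = N (\<Sum>b\<in>Basis. (x \<bullet> b) *\<^sub>R b)" by (simp add: euclidean_representation)
    also have "\<dots> \<le> (\<Sum>b\<in>Basis. N ((x \<bullet> b) *\<^sub>R b))" by (rule norm_sum_le[OF assms]) simp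
    also have "\<dots> = (\<Sum>b\<in>Basis. \<bar>x \<bullet> b\<bar> * N b)" using norm_basic(4)[OF assms] by simp
    also have "\<dots> \<le> (\<Sum>b\<in>Basis. norm x * N b)"
      by (rule sum_mono, rule mult_right_mono) (auto simp: Basis_le_norm norm_basic(6)[OF assms])
    also have "\<dots> = norm x * (\<Sum>b\<in>Basis. N b)" by (simp add: sum_distrib_left)
    also have "\<dots> \<le> K * norm x" unfolding K_def by (simp add: algebra_simps)
    finally show ?thesis .
  qed
  then show ?thesis using K0 by blast
qed

lemma norm_cont:
  fixes N :: "real^'n \<Rightarrow> real"
  assumes "is_norm N"
  shows "continuous_on S N"
proof -
  obtain K where K: "K > 0" "\<forall>x. N x \<le> K * norm x" using norm_upper[OF assms] by blast
  have "\<bar>N x - N y\<bar> \<le> K * dist x y" for x y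
  proof -
    have "N x \<le> N y + N (x - y)" using norm_basic(5)[OF assms, of y "x - y"] by simp
    moreover have "N y \<le> N x + N (y - x)" using norm_basic(5)[OF assms, of x "y - x"] by simp
    moreover have "N (x - y) \<le> K * dist x y" using K by (simp add: dist_norm)
    moreover have "N (y - x) \<le> K * dist x y" using K by (metis dist_norm dist_commute)
    ultimately show ?thesis by linarith
  qed
  then have L: "\<bar>N y - N x\<bar> \<le> K * dist y x" for x y by blast
  have "\<forall>e>0. \<exists>d>0. \<forall>y. dist y x < d \<longrightarrow> dist (N y) (N x) < e" for x
  proof (intro allI impI)
    fix e :: real assume e: "e > 0"
    show "\<exists>d>0. \<forall>y. dist y x < d \<longrightarrow> dist (N y) (N x) < e"
    proof (intro exI[of _ "e / K"] conjI allI impI)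
      show "e / K > 0" using e K(1) by simp
      fix y assume "dist y x < e / K"
      then have "K * dist y x < e" using K(1) by (simp add: field_simps)
      then show "dist (N y) (N x) < e" using L[of y x] by (simp add: dist_real_def)
    qed
  qed
  then have "isCont N x" for x by (simp add: continuous_at_eps_delta)
  then show ?thesis by (simp add: continuous_at_imp_continuous_on)
qed

lemma norm_lower:
  fixes N :: "real^'n \<Rightarrow> real"
  assumes "is_norm N"
  shows "\<exists>c>0. \<forall>x. c * norm x \<le> N x"
proof -
  obtain x0 where x0: "x0 \<in> sphere 0 1" "\<forall>y\<in>sphere 0 1. N x0 \<le> N y"
    using continuous_attains_inf[OF compact_sphere, of 0 1 N] norm_cont[OF assms]
  proof -
    have "sphere (0::real^'n) 1 \<noteq> {}" using vector_choose_size[of 1] by auto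
    then show ?thesis using that continuous_attains_inf[OF compact_sphere, of 0 1 N] norm_cont[OF assms] by blast
  qed
  have x00: "x0 \<noteq> 0" using x0 by auto
  have c0: "N x0 > 0" using norm_basic(6,7)[OF assms, of x0] x00 by linarith
  have "N x0 * norm x \<le> N x" for x
  proof (cases "x = 0")
    case True then show ?thesis using norm_basic[OF assms] by simp
  next
    case False
    then have "(1 / norm x) *\<^sub>R x \<in> sphere 0 1" by simp
    then have "N x0 \<le> N ((1 / norm x) *\<^sub>R x)" using x0 by blast
    also have "\<dots> = N x / norm x" using norm_basic(4)[OF assms] by simp
    finally show ?thesis using False by (simp add: field_simps)
  qed
  then show ?thesis using c0 by blast
qed




lemma dual_attain:
  fixes N :: "real^'n \<Rightarrow> real"
  assumes "is_norm N"
  shows "\<exists>v. N v \<le> 1 \<and> dual_norm N a = a \<bullet> v \<and> (\<forall>x. N x \<le> 1 \<longrightarrow> a \<bullet> x \<le> a \<bullet> v)"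
proof -
  obtain c where c: "c > 0" "\<forall>x. c * norm x \<le> N x" using norm_lower[OF assms] by blast
  define S where "S = {x. N x \<le> 1}"
  have "closed S" unfolding S_def
    by (rule closed_Collect_le) (auto intro: norm_cont[OF assms])
  moreover have "bounded S"
  proof -
    have "norm x \<le> 1 / c" if "x \<in> S" for x
    proof -
      have "c * norm x \<le> 1" using c(2)[rule_format, of x] that unfolding S_def by simp
      then show ?thesis using c(1) by (simp add: pos_le_divide_eq mult.commute)
    qed
    then show ?thesis by (meson boundedI)
  qed
  ultimately have "compact S" by (simp add: compact_eq_bounded_closed)
  moreover have "0 \<in> S" unfolding S_def using norm_basic(1)[OF assms] by simp
  then have "S \<noteq> {}" by blast
  moreover have "continuous_on S (\<lambda>x. a \<bullet> x)" by (intro continuous_intros)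
  ultimately obtain v where v: "v \<in> S" "\<forall>x\<in>S. a \<bullet> x \<le> a \<bullet> v"
    using continuous_attains_sup by blast
  have "dual_norm N a = a \<bullet> v" unfolding dual_norm_def
    by (rule cSup_eq_maximum) (use v in \<open>auto simp: S_def\<close>)
  then show ?thesis using v unfolding S_def by auto
qed

lemma inner_le_dual:
  fixes N :: "real^'n \<Rightarrow> real"
  assumes "is_norm N"
  shows "a \<bullet> d \<le> dual_norm N a * N d"
proof (cases "d = 0")
  case True then show ?thesis using norm_basic(1)[OF assms] by simp
next
  case False
  then have Nd: "N d > 0" using norm_basic(6,7)[OF assms, of d] by linarith
  obtain v where v: "N v \<le> 1" "dual_norm N a = a \<bullet> v" "\<forall>x. N x \<le> 1 \<longrightarrow> a \<bullet> x \<le> a \<bullet> v"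
    using dual_attain[OF assms] by blast
  have "N ((1 / N d) *\<^sub>R d) = 1" using Nd norm_basic(4)[OF assms] by simp
  then have "a \<bullet> ((1 / N d) *\<^sub>R d) \<le> dual_norm N a" using v(3)[rule_format, of "(1 / N d) *\<^sub>R d"] v(2) by simp
  then have "(a \<bullet> d) / N d \<le> dual_norm N a" by simp
  then show ?thesis using Nd by (simp add: field_simps)
qed

lemma dual_nonneg:
  fixes N :: "real^'n \<Rightarrow> real"
  assumes "is_norm N"
  shows "0 \<le> dual_norm N a"
proof -
  obtain v where v: "dual_norm N a = a \<bullet> v" "\<forall>x. N x \<le> 1 \<longrightarrow> a \<bullet> x \<le> a \<bullet> v"
    using dual_attain[OF assms] by blast
  show ?thesis using v(2)[rule_format, of 0] v(1) norm_basic(1)[OF assms] by simp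
qed

lemma dual_triangle:
  fixes N :: "real^'n \<Rightarrow> real"
  assumes "is_norm N"
  shows "dual_norm N (a + b) \<le> dual_norm N a + dual_norm N b"
proof -
  obtain v where v: "N v \<le> 1" "dual_norm N (a + b) = (a + b) \<bullet> v"
    using dual_attain[OF assms] by blast
  have "a \<bullet> v \<le> dual_norm N a" using dual_attain[OF assms, of a] v(1) by auto
  moreover have "b \<bullet> v \<le> dual_norm N b" using dual_attain[OF assms, of b] v(1) by auto
  ultimately show ?thesis using v(2) by (simp add: inner_add_left)
qed

lemma dual_scale_nonneg:
  fixes N :: "real^'n \<Rightarrow> real"
  assumes "is_norm N" "c \<ge> 0"
  shows "dual_norm N (c *\<^sub>R a) = c * dual_norm N a"
proof -
  obtain v where v: "N v \<le> 1" "dual_norm N (c *\<^sub>R a) = (c *\<^sub>R a) \<bullet> v"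
    using dual_attain[OF assms(1)] by blast
  obtain u where u: "N u \<le> 1" "dual_norm N a = a \<bullet> u"
    using dual_attain[OF assms(1)] by blast
  have "a \<bullet> v \<le> a \<bullet> u" using dual_attain[OF assms(1), of a] v(1) u by auto
  moreover have "(c *\<^sub>R a) \<bullet> u \<le> (c *\<^sub>R a) \<bullet> v" using dual_attain[OF assms(1), of "c *\<^sub>R a"] u(1) v by auto
  ultimately have "c * (a \<bullet> v) = c * (a \<bullet> u)" using assms(2)
    by (metis inner_scaleR_left mult_left_mono order_antisym)
  then show ?thesis using v u by simp
qed

lemma dual_neg:
  fixes N :: "real^'n \<Rightarrow> real"
  assumes "is_norm N"
  shows "dual_norm N (- a) = dual_norm N a"
proof -
  have *: "dual_norm N (- b) \<le> dual_norm N b" for b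
  proof -
    obtain v where v: "N v \<le> 1" "dual_norm N (- b) = (- b) \<bullet> v"
      using dual_attain[OF assms] by blast
    have "N (- v) \<le> 1" using v norm_basic(2)[OF assms] by simp
    then have "b \<bullet> (- v) \<le> dual_norm N b" using dual_attain[OF assms, of b] by auto
    then show ?thesis using v by simp
  qed
  show ?thesis using *[of a] *[of "- a"] by simp
qed

lemma dual_scale:
  fixes N :: "real^'n \<Rightarrow> real"
  assumes "is_norm N"
  shows "dual_norm N (c *\<^sub>R a) = \<bar>c\<bar> * dual_norm N a"
proof (cases "c \<ge> 0")
  case True then show ?thesis using dual_scale_nonneg[OF assms] by simp
next
  case False
  have "dual_norm N (c *\<^sub>R a) = dual_norm N (- ((- c) *\<^sub>R a))" by simp
  also have "\<dots> = (- c) * dual_norm N a" using dual_neg[OF assms] dual_scale_nonneg[OF assms, of "- c"] False by simp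
  finally show ?thesis using False by simp
qed

lemma dual_upper:
  fixes N :: "real^'n \<Rightarrow> real"
  assumes "is_norm N"
  shows "\<exists>C>0. \<forall>a. dual_norm N a \<le> C * norm a"
proof -
  obtain c where c: "c > 0" "\<forall>x. c * norm x \<le> N x" using norm_lower[OF assms] by blast
  have "dual_norm N a \<le> (1 / c) * norm a" for a
  proof -
    obtain v where v: "N v \<le> 1" "dual_norm N a = a \<bullet> v" using dual_attain[OF assms] by blast
    have "c * norm v \<le> 1" using c v(1) by (meson order_trans)
    then have nv: "norm v \<le> 1 / c" using c(1) by (simp add: pos_le_divide_eq mult.commute)
    have "a \<bullet> v \<le> norm a * norm v" by (rule norm_cauchy_schwarz)
    also have "\<dots> \<le> norm a * (1 / c)" by (rule mult_left_mono[OF nv]) simp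
    finally show ?thesis using v by simp
  qed
  then show ?thesis using c(1) by (intro exI[of _ "1 / c"]) simp
qed

lemma sq_bound: fixes a b \<alpha> :: real assumes "\<alpha> > 0" shows "a * b - \<alpha> / 2 * b\<^sup>2 \<le> a\<^sup>2 / (2 * \<alpha>)"
proof -
  have "0 \<le> (a - \<alpha> * b)\<^sup>2" by simp
  then have "0 \<le> a\<^sup>2 - 2 * \<alpha> * (a * b) + \<alpha>\<^sup>2 * b\<^sup>2" by (simp add: power2_eq_square algebra_simps)
  then show ?thesis using assms by (simp add: field_simps power2_eq_square)
qed




lemma grad_deriv:
  fixes f :: "real^'n \<Rightarrow> real"
  assumes "f differentiable (at x)"
  shows "(f has_derivative (\<lambda>d. grad f x \<bullet> d)) (at x)"
proof -
  obtain D where D: "(f has_derivative D) (at x)" using assms unfolding differentiable_def by blast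
  have lin: "linear D" using D has_derivative_linear by blast
  have "D = (\<lambda>d. adjoint D 1 \<bullet> d)"
  proof
    fix d show "D d = adjoint D 1 \<bullet> d" using adjoint_works[OF lin, of d 1] by (simp add: inner_commute)
  qed
  then have "\<exists>g. (f has_derivative (\<lambda>d. g \<bullet> d)) (at x)" using D by metis
  then show ?thesis unfolding grad_def by (rule someI_ex)
qed

lemma descent:
  fixes f :: "real^'n \<Rightarrow> real" and N :: "real^'n \<Rightarrow> real"
  assumes norm: "is_norm N" and diff: "\<forall>x. f differentiable (at x)"
    and smooth: "\<forall>x y. dual_norm N (grad f x - grad f y) \<le> L * N (x - y)"
  shows "f (x + u) \<le> f x + grad f x \<bullet> u + L / 2 * (N u)\<^sup>2"
proof -
  define g where "g = grad f x"
  define \<phi> where "\<phi> = (\<lambda>s. f (x + s *\<^sub>R u) - s * (g \<bullet> u) - L / 2 * s\<^sup>2 * (N u)\<^sup>2)"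
  have der: "DERIV \<phi> s :> (grad f (x + s *\<^sub>R u) \<bullet> u - g \<bullet> u - L * s * (N u)\<^sup>2)" for s
  proof -
    have l: "((\<lambda>s. x + s *\<^sub>R u) has_derivative (\<lambda>t. t *\<^sub>R u)) (at s)"
      by (auto intro!: derivative_eq_intros)
    have "((\<lambda>s. f (x + s *\<^sub>R u)) has_derivative (\<lambda>t. grad f (x + s *\<^sub>R u) \<bullet> (t *\<^sub>R u))) (at s)"
      using has_derivative_compose[OF l grad_deriv[of f "x + s *\<^sub>R u"]] diff by simp
    then have "DERIV (\<lambda>s. f (x + s *\<^sub>R u)) s :> grad f (x + s *\<^sub>R u) \<bullet> u"
      by (rule has_derivative_imp_has_field_derivative) simp
    then show ?thesis unfolding \<phi>_def
      by (auto intro!: derivative_eq_intros)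
  qed
  have "\<phi> 1 \<le> \<phi> 0"
  proof (rule DERIV_nonpos_imp_nonincreasing[of 0 1 \<phi>])
    fix s :: real assume s: "0 \<le> s" "s \<le> 1"
    have "(grad f (x + s *\<^sub>R u) - g) \<bullet> u \<le> dual_norm N (grad f (x + s *\<^sub>R u) - g) * N u"
      by (rule inner_le_dual[OF norm])
    also have "\<dots> \<le> (L * N (s *\<^sub>R u)) * N u"
      using smooth[rule_format, of "x + s *\<^sub>R u" x] norm_basic(6)[OF norm, of u] unfolding g_def
      by (intro mult_right_mono) auto
    also have "\<dots> = L * s * (N u)\<^sup>2" using norm_basic(4)[OF norm] s by (simp add: power2_eq_square)
    finally have "grad f (x + s *\<^sub>R u) \<bullet> u - g \<bullet> u - L * s * (N u)\<^sup>2 \<le> 0"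
      by (simp add: inner_diff_left)
    then show "\<exists>y. DERIV \<phi> s :> y \<and> y \<le> 0" using der by blast
  qed simp
  then show ?thesis unfolding \<phi>_def g_def by simp
qed

lemma conj_lb:
  fixes f :: "real^'n \<Rightarrow> real" and N :: "real^'n \<Rightarrow> real"
  assumes norm: "is_norm N" and diff: "\<forall>x. f differentiable (at x)"
    and smooth: "\<forall>x y. dual_norm N (grad f x - grad f y) \<le> L * N (x - y)"
    and L: "L > 0"
    and F: "conj (\<lambda>x. ereal (f x)) s = ereal F"
  shows "s \<bullet> x - f x + (dual_norm N (s - grad f x))\<^sup>2 / (2 * L) \<le> F"
proof -
  define a where "a = s - grad f x"
  obtain v where v: "N v \<le> 1" "dual_norm N a = a \<bullet> v" using dual_attain[OF norm] by blast
  define u where "u = (dual_norm N a / L) *\<^sub>R v"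
  have da: "dual_norm N a \<ge> 0" by (rule dual_nonneg[OF norm])
  have "ereal (s \<bullet> (x + u)) - ereal (f (x + u)) \<le> F"
    using F unfolding conj_def by (metis (mono_tags, lifting) SUP_upper UNIV_I)
  then have 1: "s \<bullet> (x + u) - f (x + u) \<le> F" by simp
  have 2: "f (x + u) \<le> f x + grad f x \<bullet> u + L / 2 * (N u)\<^sup>2" by (rule descent[OF norm diff smooth])
  have "dual_norm N a * N v \<le> dual_norm N a" using da v(1) by (simp add: mult_left_le)
  then have Nu: "N u \<le> dual_norm N a / L" unfolding u_def using norm_basic(4)[OF norm] da L
    by (simp add: divide_right_mono)
  have Nu0: "N u \<ge> 0" by (rule norm_basic(6)[OF norm])
  have "(N u)\<^sup>2 \<le> (dual_norm N a / L)\<^sup>2" using power_mono[OF Nu Nu0] .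
  then have 3: "L / 2 * (N u)\<^sup>2 \<le> (dual_norm N a)\<^sup>2 / (2 * L)" using L by (simp add: field_simps power2_eq_square)
  have 4: "a \<bullet> u = (dual_norm N a)\<^sup>2 / L" unfolding u_def using v(2) by (simp add: power2_eq_square)
  have "s \<bullet> (x + u) - f (x + u) \<ge> s \<bullet> x - f x + a \<bullet> u - L / 2 * (N u)\<^sup>2"
    using 2 unfolding a_def by (simp add: inner_add_right inner_diff_left)
  moreover have "(dual_norm N a)\<^sup>2 / L - (dual_norm N a)\<^sup>2 / (2 * L) = (dual_norm N a)\<^sup>2 / (2 * L)"
    using L by (simp add: field_simps)
  ultimately show ?thesis using 1 3 4 unfolding a_def[symmetric] by linarith
qed

lemma fs_sc:
  fixes f :: "real^'n \<Rightarrow> real" and N :: "real^'n \<Rightarrow> real"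
  assumes norm: "is_norm N" and diff: "\<forall>x. f differentiable (at x)"
    and smooth: "\<forall>x y. dual_norm N (grad f x - grad f y) \<le> L * N (x - y)"
    and L: "L > 0"
    and F1: "conj (\<lambda>x. ereal (f x)) s1 = ereal F1"
    and F2: "conj (\<lambda>x. ereal (f x)) s2 = ereal F2"
    and t: "0 \<le> t" "t \<le> 1"
  shows "conj (\<lambda>x. ereal (f x)) (t *\<^sub>R s1 + (1 - t) *\<^sub>R s2)
     \<le> ereal (t * F1 + (1 - t) * F2 - t * (1 - t) / (2 * L) * (dual_norm N (s1 - s2))\<^sup>2)"
  unfolding conj_def
proof (rule SUP_least)
  fix x
  define g where "g = grad f x"
  define A where "A = dual_norm N (s1 - g)"
  define B where "B = dual_norm N (s2 - g)"
  define D where "D = dual_norm N (s1 - s2)"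
  have l1: "s1 \<bullet> x - f x + A\<^sup>2 / (2 * L) \<le> F1" unfolding A_def g_def by (rule conj_lb[OF norm diff smooth L F1])
  have l2: "s2 \<bullet> x - f x + B\<^sup>2 / (2 * L) \<le> F2" unfolding B_def g_def by (rule conj_lb[OF norm diff smooth L F2])
  have D0: "0 \<le> D" unfolding D_def by (rule dual_nonneg[OF norm])
  have "D = dual_norm N ((s1 - g) + (- (s2 - g)))" unfolding D_def by (simp add: algebra_simps)
  also have "\<dots> \<le> A + B" unfolding A_def B_def using dual_triangle[OF norm] dual_neg[OF norm] by metis
  finally have DAB: "D \<le> A + B" .
  have "D\<^sup>2 \<le> (A + B)\<^sup>2" using D0 DAB by (simp add: power_mono)
  moreover have "t * (1 - t) * (A + B)\<^sup>2 \<le> t * A\<^sup>2 + (1 - t) * B\<^sup>2"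
  proof -
    have "0 \<le> (t * A - (1 - t) * B)\<^sup>2" by simp
    then show ?thesis by (simp add: power2_eq_square algebra_simps)
  qed
  ultimately have key: "t * (1 - t) * D\<^sup>2 \<le> t * A\<^sup>2 + (1 - t) * B\<^sup>2"
    using t by (smt (verit) mult_left_mono mult_nonneg_nonneg)
  have "t * (s1 \<bullet> x - f x + A\<^sup>2 / (2 * L)) + (1 - t) * (s2 \<bullet> x - f x + B\<^sup>2 / (2 * L)) \<le> t * F1 + (1 - t) * F2"
    using l1 l2 t by (smt (verit) mult_left_mono)
  moreover have "(t *\<^sub>R s1 + (1 - t) *\<^sub>R s2) \<bullet> x - f x + (t * A\<^sup>2 + (1 - t) * B\<^sup>2) / (2 * L)
     = t * (s1 \<bullet> x - f x + A\<^sup>2 / (2 * L)) + (1 - t) * (s2 \<bullet> x - f x + B\<^sup>2 / (2 * L))"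
    using L by (simp add: inner_add_left inner_diff_left algebra_simps add_divide_distrib diff_divide_distrib)
  ultimately have "(t *\<^sub>R s1 + (1 - t) *\<^sub>R s2) \<bullet> x - f x + (t * A\<^sup>2 + (1 - t) * B\<^sup>2) / (2 * L) \<le> t * F1 + (1 - t) * F2"
    by linarith
  moreover have "t * (1 - t) / (2 * L) * D\<^sup>2 \<le> (t * A\<^sup>2 + (1 - t) * B\<^sup>2) / (2 * L)"
    using key L by (simp add: divide_right_mono)
  ultimately show "ereal ((t *\<^sub>R s1 + (1 - t) *\<^sub>R s2) \<bullet> x) - ereal (f x)
     \<le> ereal (t * F1 + (1 - t) * F2 - t * (1 - t) / (2 * L) * D\<^sup>2)" by simp
qed




lemma closed_seq_lim:
  fixes S :: "'a::first_countable_topology set"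
  assumes "closed S" "\<And>n. x n \<in> S" "x \<longlonglongrightarrow> l"
  shows "l \<in> S"
  using assms closed_sequential_limits by blast

lemma ereal_le_real: "e = ereal (real_of_ereal e) \<Longrightarrow> e \<le> ereal a \<Longrightarrow> real_of_ereal e \<le> a"
  by (cases e) auto

context
  fixes N :: "real^'n \<Rightarrow> real" and h w :: "real^'n \<Rightarrow> ereal" and M \<alpha> :: real
  assumes norm: "is_norm N"
    and h_closed: "eclosed h" and h_proper: "eproper h" and h_convex: "econvex h"
    and h_bdd: "bounded (edom h)"
    and w_nonneg: "\<forall>x. w x \<ge> 0"
    and w_closed: "eclosed w"
    and w_sc: "strongly_convex_on N 1 (edom h) w"
    and wM: "\<forall>x\<in>edom h. w x \<le> ereal M"
    and \<alpha>_pos: "\<alpha> > 0"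
begin

definition "Hr x = real_of_ereal (h x) + \<alpha> * real_of_ereal (w x)"

lemma epi_iff: "(x, t) \<in> epi F \<longleftrightarrow> F x \<le> ereal t"
  unfolding epi_def by simp

lemma hD: "x \<in> edom h \<Longrightarrow> h x = ereal (real_of_ereal (h x))"
  using h_proper unfolding eproper_def edom_def by (cases "h x") auto

lemma wD: "x \<in> edom h \<Longrightarrow> w x = ereal (real_of_ereal (w x)) \<and> 0 \<le> real_of_ereal (w x) \<and> real_of_ereal (w x) \<le> M"
proof -
  assume x: "x \<in> edom h"
  have "0 \<le> w x" "w x \<le> ereal M" using w_nonneg wM x by auto
  then show ?thesis by (cases "w x") auto
qed

lemma halpha_in: "x \<in> edom h \<Longrightarrow> h x + ereal \<alpha> * w x = ereal (Hr x)"
proof -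
  assume x: "x \<in> edom h"
  define a where "a = real_of_ereal (h x)"
  define b where "b = real_of_ereal (w x)"
  have ha: "h x = ereal a" unfolding a_def by (rule hD[OF x])
  have wb: "w x = ereal b" unfolding b_def using wD[OF x] by blast
  show ?thesis unfolding Hr_def a_def[symmetric] b_def[symmetric] ha wb by simp
qed

lemma halpha_out: "x \<notin> edom h \<Longrightarrow> h x + ereal \<alpha> * w x = \<infinity>"
proof -
  assume "x \<notin> edom h"
  then have "h x = \<infinity>" unfolding edom_def by simp
  moreover have "ereal \<alpha> * w x \<ge> 0" using w_nonneg \<alpha>_pos by simp
  ultimately show ?thesis by (cases "w x") auto
qed

lemma h_epi: "x \<in> edom h \<Longrightarrow> (x, real_of_ereal (h x)) \<in> epi h"
  unfolding epi_iff using hD by (metis order_refl)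

lemma w_epi: "x \<in> edom h \<Longrightarrow> (x, real_of_ereal (w x)) \<in> epi w"
  unfolding epi_iff using wD by (metis order_refl)

lemma Dne: "edom h \<noteq> {}"
  using h_proper unfolding eproper_def edom_def by auto

lemma Hconv:
  assumes x: "x \<in> edom h" and y: "y \<in> edom h" and t: "0 \<le> t" "t \<le> 1"
  shows "t *\<^sub>R x + (1 - t) *\<^sub>R y \<in> edom h"
    "Hr (t *\<^sub>R x + (1 - t) *\<^sub>R y) \<le> t * Hr x + (1 - t) * Hr y - \<alpha> / 2 * t * (1 - t) * (N (x - y))\<^sup>2"
proof -
  define z where "z = t *\<^sub>R x + (1 - t) *\<^sub>R y"
  have p1: "(x, real_of_ereal (h x)) \<in> epi h" using hD[OF x] by (simp add: epi_iff)
  have p2: "(y, real_of_ereal (h y)) \<in> epi h" using hD[OF y] by (simp add: epi_iff)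
  have "t *\<^sub>R (x, real_of_ereal (h x)) + (1 - t) *\<^sub>R (y, real_of_ereal (h y)) \<in> epi h"
    by (rule convexD[OF h_convex[unfolded econvex_def] p1 p2]) (use t in auto)
  then have hz: "h z \<le> ereal (t * real_of_ereal (h x) + (1 - t) * real_of_ereal (h y))"
    unfolding z_def by (simp add: epi_iff)
  have "h z < \<infinity>" using hz by (rule le_less_trans) simp
  then have zD': "z \<in> edom h" unfolding edom_def by simp
  then show "t *\<^sub>R x + (1 - t) *\<^sub>R y \<in> edom h" unfolding z_def .
  define c where "c = real_of_ereal (h z)"
  have hc: "h z = ereal c" unfolding c_def by (rule hD[OF zD'])
  have hz': "c \<le> t * real_of_ereal (h x) + (1 - t) * real_of_ereal (h y)"
    using hz unfolding hc by simp
  have "w z \<le> ereal t * w x + ereal (1 - t) * w y - ereal (1 / 2 * t * (1 - t) * (N (x - y))\<^sup>2)"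
    using w_sc x y t unfolding strongly_convex_on_def z_def by blast
  also have "\<dots> = ereal (t * real_of_ereal (w x) + (1 - t) * real_of_ereal (w y) - 1 / 2 * t * (1 - t) * (N (x - y))\<^sup>2)"
  proof -
    define a where "a = real_of_ereal (w x)"
    define b where "b = real_of_ereal (w y)"
    have wa: "w x = ereal a" unfolding a_def using wD[OF x] by blast
    have wb: "w y = ereal b" unfolding b_def using wD[OF y] by blast
    show ?thesis unfolding a_def[symmetric] b_def[symmetric] wa wb by simp
  qed
  finally have wz0: "w z \<le> ereal (t * real_of_ereal (w x) + (1 - t) * real_of_ereal (w y) - 1 / 2 * t * (1 - t) * (N (x - y))\<^sup>2)" .
  define e where "e = real_of_ereal (w z)"
  have we: "w z = ereal e" unfolding e_def using wD[OF zD'] by blast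
  have wz: "e \<le> t * real_of_ereal (w x) + (1 - t) * real_of_ereal (w y) - 1 / 2 * t * (1 - t) * (N (x - y))\<^sup>2"
    using wz0 unfolding we by simp
  have "\<alpha> * e \<le> \<alpha> * (t * real_of_ereal (w x) + (1 - t) * real_of_ereal (w y) - 1 / 2 * t * (1 - t) * (N (x - y))\<^sup>2)"
    using wz \<alpha>_pos by simp
  then show "Hr (t *\<^sub>R x + (1 - t) *\<^sub>R y) \<le> t * Hr x + (1 - t) * Hr y - \<alpha> / 2 * t * (1 - t) * (N (x - y))\<^sup>2"
    using hz' unfolding z_def[symmetric] Hr_def c_def[symmetric] e_def[symmetric] by (simp add: algebra_simps)
qed


lemma inner_le_R:
  assumes "\<forall>x\<in>edom h. norm x \<le> R" "x \<in> edom h"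
  shows "y \<bullet> x \<le> norm y * R"
proof -
  have "y \<bullet> x \<le> norm y * norm x" by (rule norm_cauchy_schwarz)
  also have "\<dots> \<le> norm y * R" using assms by (simp add: mult_left_mono)
  finally show ?thesis .
qed

lemma u_bdd: "\<exists>B. \<forall>x\<in>edom h. y \<bullet> x - Hr x \<le> B"
proof (rule ccontr)
  assume "\<not> ?thesis"
  then have "\<forall>j::nat. \<exists>x. x \<in> edom h \<and> y \<bullet> x - Hr x > real j" by (meson not_le)
  then have "\<exists>X. \<forall>j. X j \<in> edom h \<and> y \<bullet> X j - Hr (X j) > real j" by (rule choice)
  then obtain X where X0: "\<forall>j. X j \<in> edom h \<and> y \<bullet> X j - Hr (X j) > real j" by blast
  have X: "\<And>j. X j \<in> edom h" "\<And>j. y \<bullet> X j - Hr (X j) > real j" using X0 by auto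
  obtain R where R: "\<forall>x\<in>edom h. norm x \<le> R" using h_bdd unfolding bounded_iff by blast
  have "\<forall>j. X j \<in> cball 0 R" using X(1) R by auto
  from seq_compactE[OF compact_imp_seq_compact[OF compact_cball] this]
  obtain l r where r: "strict_mono r" "(X \<circ> r) \<longlonglongrightarrow> l" by blast
  have "h l \<le> ereal t" for t
  proof -
    define K where "K = nat \<lceil>norm y * R - t\<rceil>"
    have mem: "(X (r (j + K)), t) \<in> epi h" for j
    proof -
      define m where "m = r (j + K)"
      have "j + K \<le> m" unfolding m_def using seq_suble[OF r(1)] by blast
      then have mK: "real K \<le> real m" by simp
      have "norm y * R - t \<le> real K" unfolding K_def by linarith
      have hX: "h (X m) = ereal (real_of_ereal (h (X m)))" by (rule hD[OF X(1)])
      have "0 \<le> real_of_ereal (w (X m))" using wD[OF X(1)] by blast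
      then have "real_of_ereal (h (X m)) \<le> Hr (X m)" unfolding Hr_def using \<alpha>_pos by simp
      also have "\<dots> < y \<bullet> X m - real m" using X(2)[of m] by simp
      also have "\<dots> \<le> norm y * R - real m" using inner_le_R[OF R X(1)] by simp
      also have "\<dots> \<le> t" using mK \<open>norm y * R - t \<le> real K\<close> by simp
      finally have "real_of_ereal (h (X m)) \<le> t" by simp
      then have "ereal (real_of_ereal (h (X m))) \<le> ereal t" by simp
      then have "h (X m) \<le> ereal t" using hX by argo
      then show ?thesis unfolding m_def by (simp add: epi_iff)
    qed
    have lim: "(\<lambda>j. (X (r (j + K)), t)) \<longlonglongrightarrow> (l, t)"
      using LIMSEQ_ignore_initial_segment[OF r(2), of K] by (intro tendsto_Pair) (auto simp: o_def)
    have "(l, t) \<in> epi h"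
      by (rule closed_seq_lim[of "epi h" "\<lambda>j. (X (r (j + K)), t)", OF h_closed[unfolded eclosed_def] mem lim])
    then show ?thesis by (simp add: epi_iff)
  qed
  then have "h l = -\<infinity>" by (rule ereal_bot)
  then show False using h_proper unfolding eproper_def by blast
qed

lemma u_max: "\<exists>xm\<in>edom h. \<forall>x\<in>edom h. y \<bullet> x - Hr x \<le> y \<bullet> xm - Hr xm"
proof -
  define U where "U = (\<lambda>x. y \<bullet> x - Hr x) ` edom h"
  define s where "s = Sup U"
  have Une: "U \<noteq> {}" unfolding U_def using Dne by blast
  have Ubdd: "bdd_above U" unfolding U_def using u_bdd[of y] by (auto intro: bdd_aboveI2)
  have ub: "\<And>x. x \<in> edom h \<Longrightarrow> y \<bullet> x - Hr x \<le> s"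
    unfolding s_def U_def using Ubdd U_def by (auto intro: cSup_upper)
  have "\<forall>j::nat. \<exists>x. x \<in> edom h \<and> y \<bullet> x - Hr x > s - inverse (real (Suc j))"
  proof
    fix j :: nat
    have "s - inverse (real (Suc j)) < Sup U" unfolding s_def by simp
    from less_cSupE[OF this Une]
    obtain v where "v \<in> U" "s - inverse (real (Suc j)) < v" by blast
    then show "\<exists>x. x \<in> edom h \<and> y \<bullet> x - Hr x > s - inverse (real (Suc j))" unfolding U_def by blast
  qed
  then have "\<exists>X. \<forall>j. X j \<in> edom h \<and> y \<bullet> X j - Hr (X j) > s - inverse (real (Suc j))" by (rule choice)
  then obtain X where X0: "\<forall>j. X j \<in> edom h \<and> y \<bullet> X j - Hr (X j) > s - inverse (real (Suc j))" by blast
  have X: "\<And>j. X j \<in> edom h" "\<And>j. y \<bullet> X j - Hr (X j) > s - inverse (real (Suc j))" using X0 by auto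
  obtain R where R: "\<forall>x\<in>edom h. norm x \<le> R" using h_bdd unfolding bounded_iff by blast
  define wr where "wr = (\<lambda>x. real_of_ereal (w x))"
  define hr where "hr = (\<lambda>x. real_of_ereal (h x))"
  define P where "P = (\<lambda>j. (X j, wr (X j)))"
  have Pm: "\<forall>j. P j \<in> cball 0 R \<times> {0..M}"
  proof
    fix j
    have "0 \<le> wr (X j)" "wr (X j) \<le> M" unfolding wr_def using wD[OF X(1)[of j]] by blast+
    moreover have "X j \<in> cball 0 R" using X(1)[of j] R by auto
    ultimately show "P j \<in> cball 0 R \<times> {0..M}" unfolding P_def by simp
  qed
  have Sc: "seq_compact (cball (0::real^'n) R \<times> {0..M})"
    by (intro compact_imp_seq_compact compact_Times compact_cball compact_Icc)
  from seq_compactE[OF Sc Pm]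
  obtain lb r where r: "strict_mono r" "(P \<circ> r) \<longlonglongrightarrow> lb" by blast
  obtain l b where lb: "lb = (l, b)" by fastforce
  have Xr: "(\<lambda>j. X (r j)) \<longlonglongrightarrow> l" using tendsto_fst[OF r(2)] unfolding lb P_def by (simp add: o_def)
  have wr: "(\<lambda>j. wr (X (r j))) \<longlonglongrightarrow> b" using tendsto_snd[OF r(2)] unfolding lb P_def by (simp add: o_def)
  have ur: "(\<lambda>j. y \<bullet> X (r j) - Hr (X (r j))) \<longlonglongrightarrow> s"
  proof (rule tendsto_sandwich[where f = "\<lambda>j. s - inverse (real (Suc j))" and h = "\<lambda>j. s"])
    show "\<forall>\<^sub>F j in sequentially. s - inverse (real (Suc j)) \<le> y \<bullet> X (r j) - Hr (X (r j))"
    proof (intro always_eventually allI)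
      fix j
      have "j \<le> r j" using seq_suble[OF r(1)] by blast
      then have "inverse (real (Suc (r j))) \<le> inverse (real (Suc j))" by (simp add: le_imp_inverse_le)
      then show "s - inverse (real (Suc j)) \<le> y \<bullet> X (r j) - Hr (X (r j))" using X(2)[of "r j"] by linarith
    qed
    show "\<forall>\<^sub>F j in sequentially. y \<bullet> X (r j) - Hr (X (r j)) \<le> s" using ub X(1) by simp
    show "(\<lambda>j. s - inverse (real (Suc j))) \<longlonglongrightarrow> s"
      using tendsto_diff[OF tendsto_const LIMSEQ_inverse_real_of_nat, of s] by simp
  qed simp
  define a where "a = y \<bullet> l - \<alpha> * b - s"
  have hr_eq: "hr (X (r j)) = y \<bullet> X (r j) - \<alpha> * wr (X (r j)) - (y \<bullet> X (r j) - Hr (X (r j)))" for j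
    unfolding Hr_def hr_def wr_def by simp
  have hrl: "(\<lambda>j. hr (X (r j))) \<longlonglongrightarrow> a"
    unfolding hr_eq a_def by (intro tendsto_intros Xr wr ur)
  have "(l, a) \<in> epi h"
  proof -
    have m: "\<And>j. (X (r j), hr (X (r j))) \<in> epi h" unfolding hr_def using h_epi X(1) by blast
    have lim: "(\<lambda>j. (X (r j), hr (X (r j)))) \<longlonglongrightarrow> (l, a)" by (intro tendsto_Pair Xr hrl)
    show ?thesis by (rule closed_seq_lim[of "epi h" "\<lambda>j. (X (r j), hr (X (r j)))", OF h_closed[unfolded eclosed_def] m lim])
  qed
  then have hl: "h l \<le> ereal a" by (simp add: epi_iff)
  have "(l, b) \<in> epi w"
  proof -
    have m: "\<And>j. (X (r j), wr (X (r j))) \<in> epi w" unfolding wr_def using w_epi X(1) by blast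
    have lim: "(\<lambda>j. (X (r j), wr (X (r j)))) \<longlonglongrightarrow> (l, b)" by (intro tendsto_Pair Xr wr)
    show ?thesis by (rule closed_seq_lim[of "epi w" "\<lambda>j. (X (r j), wr (X (r j)))", OF w_closed[unfolded eclosed_def] m lim])
  qed
  then have wl: "w l \<le> ereal b" by (simp add: epi_iff)
  have "h l < \<infinity>" using hl by (rule le_less_trans) simp
  then have lD: "l \<in> edom h" unfolding edom_def by simp
  have "hr l \<le> a" unfolding hr_def by (rule ereal_le_real[OF hD[OF lD] hl])
  moreover have "wr l \<le> b" unfolding wr_def by (rule ereal_le_real[OF conjunct1[OF wD[OF lD]] wl])
  ultimately have "\<alpha> * wr l \<le> \<alpha> * b" "hr l \<le> a" using \<alpha>_pos by simp_all
  then have "s \<le> y \<bullet> l - Hr l" unfolding Hr_def a_def hr_def wr_def by linarith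
  then show ?thesis using ub lD by (meson order_trans)
qed


definition "xm y = (SOME x. x \<in> edom h \<and> (\<forall>x'\<in>edom h. y \<bullet> x' - Hr x' \<le> y \<bullet> x - Hr x))"
definition "phi y = y \<bullet> xm y - Hr (xm y)"

lemma xm_prop: "xm y \<in> edom h" "\<And>x. x \<in> edom h \<Longrightarrow> y \<bullet> x - Hr x \<le> phi y"
proof -
  have "\<exists>x. x \<in> edom h \<and> (\<forall>x'\<in>edom h. y \<bullet> x' - Hr x' \<le> y \<bullet> x - Hr x)" using u_max[of y] by blast
  then have *: "xm y \<in> edom h \<and> (\<forall>x'\<in>edom h. y \<bullet> x' - Hr x' \<le> y \<bullet> xm y - Hr (xm y))"
    unfolding xm_def by (rule someI_ex)
  then show "xm y \<in> edom h" by blast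
  show "\<And>x. x \<in> edom h \<Longrightarrow> y \<bullet> x - Hr x \<le> phi y" using * unfolding phi_def by blast
qed

lemma conj_eq: "conj (\<lambda>x. h x + ereal \<alpha> * w x) y = ereal (phi y)"
  unfolding conj_def
proof (rule antisym)
  show "(SUP x. ereal (y \<bullet> x) - (h x + ereal \<alpha> * w x)) \<le> ereal (phi y)"
  proof (rule SUP_least)
    fix x
    show "ereal (y \<bullet> x) - (h x + ereal \<alpha> * w x) \<le> ereal (phi y)"
    proof (cases "x \<in> edom h")
      case True then show ?thesis using halpha_in[OF True] xm_prop(2)[OF True] by simp
    next
      case False then show ?thesis unfolding halpha_out[OF False] by simp
    qed
  qed
  show "ereal (phi y) \<le> (SUP x. ereal (y \<bullet> x) - (h x + ereal \<alpha> * w x))"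
    by (rule SUP_upper2[of "xm y"]) (simp_all add: halpha_in[OF xm_prop(1)] phi_def)
qed

lemma growth:
  assumes x: "x \<in> edom h"
  shows "Hr (xm y) + y \<bullet> (x - xm y) + \<alpha> / 2 * (N (x - xm y))\<^sup>2 \<le> Hr x"
proof -
  define p where "p = xm y"
  have pD: "p \<in> edom h" unfolding p_def by (rule xm_prop(1))
  define Q where "Q = Hr x - Hr p - y \<bullet> (x - p)"
  define c where "c = \<alpha> / 2 * (N (x - p))\<^sup>2"
  have c0: "0 \<le> c" unfolding c_def using \<alpha>_pos by simp
  have key: "(1 - t) * c \<le> Q" if t: "0 < t" "t < 1" for t
  proof -
    define z where "z = t *\<^sub>R x + (1 - t) *\<^sub>R p"
    have zD: "z \<in> edom h" and Hz: "Hr z \<le> t * Hr x + (1 - t) * Hr p - \<alpha> / 2 * t * (1 - t) * (N (x - p))\<^sup>2"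
      using Hconv[OF x pD, of t] t unfolding z_def by auto
    have "y \<bullet> z - Hr z \<le> y \<bullet> p - Hr p" using xm_prop(2)[OF zD] unfolding phi_def p_def by simp
    moreover have "y \<bullet> z = t * (y \<bullet> x) + (1 - t) * (y \<bullet> p)" unfolding z_def by (simp add: inner_add_right)
    ultimately have "t * ((1 - t) * c - Q) \<le> 0" using Hz unfolding Q_def c_def
      by (simp add: inner_diff_right algebra_simps)
    then have "(1 - t) * c - Q \<le> 0" using t mult_le_0_iff[of t "(1 - t) * c - Q"] by auto
    then show ?thesis by simp
  qed
  have "c \<le> Q"
  proof (rule ccontr)
    assume "\<not> c \<le> Q"
    then have cQ: "Q < c" by simp
    have "(1 - 1/2) * c \<le> Q" using key[of "1/2"] by simp
    then have Q0: "0 \<le> Q" using c0 by simp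
    then have cpos: "c > 0" using cQ by simp
    define t where "t = (c - Q) / (2 * c)"
    have t0: "0 < t" unfolding t_def using cQ cpos by simp
    have t1: "t < 1" unfolding t_def using cQ cpos Q0 by (simp add: field_simps)
    have "(1 - t) * c = (c + Q) / 2" unfolding t_def using cpos by (simp add: field_simps)
    then show False using key[OF t0 t1] cQ by simp
  qed
  then show ?thesis unfolding Q_def c_def p_def by simp
qed

lemma phi_lower: "phi y + (y' - y) \<bullet> xm y \<le> phi y'"
  using xm_prop(2)[OF xm_prop(1), of y' y] unfolding phi_def by (simp add: inner_diff_left)

lemma phi_upper: "phi y' \<le> phi y + (y' - y) \<bullet> xm y + (dual_norm N (y' - y))\<^sup>2 / (2 * \<alpha>)"
proof -
  define p where "p = xm y"
  define q where "q = xm y'"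
  define d where "d = q - p"
  have g: "Hr p + y \<bullet> d + \<alpha> / 2 * (N d)\<^sup>2 \<le> Hr q"
    using growth[OF xm_prop(1)[of y'], of y] unfolding p_def q_def d_def by simp
  have "phi y' = y' \<bullet> q - Hr q" unfolding phi_def q_def by simp
  also have "\<dots> \<le> (y \<bullet> p - Hr p) + (y' - y) \<bullet> p + ((y' - y) \<bullet> d - \<alpha> / 2 * (N d)\<^sup>2)"
    using g unfolding d_def by (simp add: inner_diff_left inner_diff_right)
  also have "(y' - y) \<bullet> d - \<alpha> / 2 * (N d)\<^sup>2 \<le> dual_norm N (y' - y) * N d - \<alpha> / 2 * (N d)\<^sup>2"
    using inner_le_dual[OF norm] by simp
  also have "\<dots> \<le> (dual_norm N (y' - y))\<^sup>2 / (2 * \<alpha>)" by (rule sq_bound[OF \<alpha>_pos])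
  finally show ?thesis unfolding phi_def p_def by simp
qed

lemma phi_deriv: "(phi has_derivative (\<lambda>d. xm y \<bullet> d)) (at y)"
proof -
  obtain C where C: "C > 0" "\<forall>a. dual_norm N a \<le> C * norm a" using dual_upper[OF norm] by blast
  define K where "K = C\<^sup>2 / (2 * \<alpha>)"
  have bnd: "\<bar>phi y' - phi y - xm y \<bullet> (y' - y)\<bar> \<le> K * (norm (y' - y))\<^sup>2" for y'
  proof -
    have "0 \<le> dual_norm N (y' - y)" by (rule dual_nonneg[OF norm])
    then have "(dual_norm N (y' - y))\<^sup>2 \<le> (C * norm (y' - y))\<^sup>2" using C(2) by (simp add: power_mono)
    then have "(dual_norm N (y' - y))\<^sup>2 / (2 * \<alpha>) \<le> K * (norm (y' - y))\<^sup>2"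
      unfolding K_def using \<alpha>_pos by (simp add: divide_right_mono power_mult_distrib)
    moreover have "0 \<le> (dual_norm N (y' - y))\<^sup>2 / (2 * \<alpha>)" using \<alpha>_pos by simp
    ultimately show ?thesis using phi_lower[of y y'] phi_upper[of y' y] by (simp add: inner_commute abs_le_iff)
  qed
  have "((\<lambda>y'. (phi y' - phi y - xm y \<bullet> (y' - y)) /\<^sub>R norm (y' - y)) \<longlongrightarrow> 0) (at y)"
  proof (rule Lim_null_comparison)
    show "\<forall>\<^sub>F y' in at y. norm ((phi y' - phi y - xm y \<bullet> (y' - y)) /\<^sub>R norm (y' - y)) \<le> K * norm (y' - y)"
    proof (intro always_eventually allI)
      fix y'
      show "norm ((phi y' - phi y - xm y \<bullet> (y' - y)) /\<^sub>R norm (y' - y)) \<le> K * norm (y' - y)"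
      proof (cases "y' = y")
        case True then show ?thesis by simp
      next
        case False
        then have n: "norm (y' - y) > 0" by simp
        have "\<bar>phi y' - phi y - xm y \<bullet> (y' - y)\<bar> / norm (y' - y) \<le> K * norm (y' - y)"
          using bnd[of y'] n by (simp add: divide_le_eq power2_eq_square mult.assoc)
        moreover have "norm ((phi y' - phi y - xm y \<bullet> (y' - y)) /\<^sub>R norm (y' - y))
            = \<bar>phi y' - phi y - xm y \<bullet> (y' - y)\<bar> / norm (y' - y)"
          using n by (simp add: abs_mult divide_inverse_commute)
        ultimately show ?thesis by simp
      qed
    qed
    have "((\<lambda>y'. K * norm (y' - y)) \<longlongrightarrow> K * norm (y - y)) (at y)" by (intro tendsto_intros)
    then show "((\<lambda>y'. K * norm (y' - y)) \<longlongrightarrow> 0) (at y)" by simp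
  qed
  moreover have "bounded_linear (\<lambda>d. xm y \<bullet> d)" by (rule bounded_linear_inner_right)
  ultimately show ?thesis unfolding has_derivative_at_within by simp
qed

lemma conj_analysis_ctx:
  "\<exists>phi xm. (\<forall>y. conj (\<lambda>x. h x + ereal \<alpha> * w x) y = ereal (phi y))
     \<and> (\<forall>y. (phi has_derivative (\<lambda>d. xm y \<bullet> d)) (at y))
     \<and> (\<forall>y y'. phi y + (y' - y) \<bullet> xm y \<le> phi y')
     \<and> (\<forall>y y'. phi y' \<le> phi y + (y' - y) \<bullet> xm y + (dual_norm N (y' - y))\<^sup>2 / (2 * \<alpha>))
     \<and> (\<exists>x0 c. \<forall>y. y \<bullet> x0 - c \<le> phi y)"
proof -
  obtain x0 where x0: "x0 \<in> edom h" using Dne by blast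
  show ?thesis
    apply (rule exI[of _ phi], rule exI[of _ xm])
    using conj_eq phi_deriv phi_lower phi_upper xm_prop(2)[OF x0] by blast
qed

end




lemma grad_unique:
  assumes "(F has_derivative (\<lambda>d. a \<bullet> d)) (at x)"
  shows "grad F x = a"
proof -
  have "\<exists>g. (F has_derivative (\<lambda>d. g \<bullet> d)) (at x)" using assms by blast
  then have "(F has_derivative (\<lambda>d. grad F x \<bullet> d)) (at x)" unfolding grad_def by (rule someI_ex)
  then have "(\<lambda>d. grad F x \<bullet> d) = (\<lambda>d. a \<bullet> d)" using assms by (rule has_derivative_unique)
  then have "grad F x \<bullet> (grad F x - a) = a \<bullet> (grad F x - a)" by metis
  then have "(grad F x - a) \<bullet> (grad F x - a) = 0" by (simp add: inner_diff_left)
  then show ?thesis by simp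
qed

lemma recur:
  fixes e g :: "nat \<Rightarrow> real"
  assumes \<eta>: "0 < \<eta>" "\<eta> < 1" and e0: "\<And>k. 0 \<le> e k" and eg: "\<And>k. e k \<le> g k"
    and step: "\<And>k. e (Suc k) \<le> e k - \<eta> * g k"
  shows "g k \<le> (1 - \<eta>) ^ k * e 0 / \<eta>"
proof -
  have ek: "e k \<le> (1 - \<eta>) ^ k * e 0" for k
  proof (induction k)
    case 0 then show ?case by simp
  next
    case (Suc k)
    have "e (Suc k) \<le> e k - \<eta> * e k" using step[of k] eg[of k] \<eta> by (smt (verit) mult_left_mono)
    also have "\<dots> = (1 - \<eta>) * e k" by (simp add: algebra_simps)
    also have "\<dots> \<le> (1 - \<eta>) * ((1 - \<eta>) ^ k * e 0)" using Suc \<eta> by (simp add: mult_left_mono)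
    finally show ?case by simp
  qed
  have "\<eta> * g k \<le> e k" using step[of k] e0[of "Suc k"] by simp
  then have "g k \<le> e k / \<eta>" using \<eta> by (simp add: field_simps)
  also have "\<dots> \<le> (1 - \<eta>) ^ k * e 0 / \<eta>" using ek[of k] \<eta> by (simp add: divide_right_mono)
  finally show ?thesis .
qed

lemma final_num:
  fixes \<eta> e0 \<epsilon> gap :: real
  assumes \<eta>: "0 < \<eta>" "\<eta> < 1" and e0: "0 \<le> e0" and \<epsilon>: "0 < \<epsilon>"
    and gap: "gap \<le> (1 - \<eta>) ^ k * e0 / \<eta>"
    and k: "real k \<ge> (1 / \<eta>) * ln (1 + 2 * (1 / \<eta>) * e0 / \<epsilon>)"
  shows "gap \<le> \<epsilon> / 2"
proof -
  define X where "X = 1 + 2 * (1 / \<eta>) * e0 / \<epsilon>"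
  have X1: "X \<ge> 1" unfolding X_def using \<eta> e0 \<epsilon> by simp
  have "ln X \<le> \<eta> * real k" using k \<eta> unfolding X_def[symmetric] by (simp add: field_simps)
  then have "exp (ln X) \<le> exp (\<eta> * real k)" by simp
  then have "X \<le> exp (\<eta> * real k)" using X1 by simp
  then have ex: "exp (- (\<eta> * real k)) \<le> 1 / X" using X1
    by (simp add: exp_minus field_simps)
  have "1 - \<eta> \<le> exp (- \<eta>)" using exp_ge_add_one_self[of "- \<eta>"] by simp
  then have "(1 - \<eta>) ^ k \<le> exp (- \<eta>) ^ k" using \<eta> by (simp add: power_mono)
  also have "\<dots> = exp (- (\<eta> * real k))" by (simp add: exp_of_nat_mult[symmetric] mult.commute)
  finally have pk: "(1 - \<eta>) ^ k \<le> 1 / X" using ex by simp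
  have "gap \<le> (1 / X) * e0 / \<eta>" using gap pk e0 \<eta> by (smt (verit) divide_right_mono mult_right_mono)
  also have "\<dots> \<le> \<epsilon> / 2"
  proof -
    have a: "e0 / \<eta> \<le> \<epsilon> / 2 * X" unfolding X_def using \<epsilon> \<eta> by (simp add: field_simps)
    have Xp: "X > 0" using X1 by simp
    have "(e0 / \<eta>) / X \<le> \<epsilon> / 2" using pos_divide_le_eq[OF Xp, of "e0 / \<eta>" "\<epsilon> / 2"] a by blast
    moreover have "(1 / X) * e0 / \<eta> = (e0 / \<eta>) / X" by simp
    ultimately show ?thesis by argo
  qed
  finally show ?thesis .
qed




theorem theorem3p3:
  fixes N :: "real^'n \<Rightarrow> real"
    and f :: "real^'n \<Rightarrow> real"
    and h w :: "real^'n \<Rightarrow> ereal"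
    and L M \<epsilon> :: real
    and z zb :: "nat \<Rightarrow> real^'n"
  assumes norm: "is_norm N"
    and f_convex: "convex_on UNIV f"
    and f_diff: "\<forall>x. f differentiable (at x)"
    and L_pos: "L > 0"
    and f_smooth: "\<forall>x y. dual_norm N (grad f x - grad f y) \<le> L * N (x - y)"
    and h_closed: "eclosed h" and h_proper: "eproper h" and h_convex: "econvex h"
    and h_bdd: "bounded (edom h)"
    and w_nonneg: "\<forall>x. w x \<ge> 0"
    and w_closed: "eclosed w"
    and w_sc: "strongly_convex_on N 1 (edom h) w"
    and M_max: "(\<forall>x\<in>edom h. w x \<le> ereal M) \<and> (\<exists>x\<in>edom h. w x = ereal M)"
    and M_pos: "M > 0"
    and eps_pos: "\<epsilon> > 0"
  defines "\<alpha> \<equiv> \<epsilon> / (2 * M)"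
  defines "\<eta> \<equiv> \<alpha> / (L + \<alpha>)"
  defines "h\<alpha> \<equiv> (\<lambda>x. h x + ereal \<alpha> * w x)"
  defines "fs \<equiv> conj (\<lambda>x. ereal (f x))"
  defines "\<psi> \<equiv> (\<lambda>v. conj h\<alpha> (- v) + fs v)"
  defines "G \<equiv> (\<lambda>k. grad (\<lambda>u. real_of_ereal (conj h\<alpha> u)) (- z k))"
  defines "\<Gamma> \<equiv> (\<lambda>k v. conj h\<alpha> (- z k) + ereal ((- G k) \<bullet> (v - z k)) + fs v)"
  assumes z0: "z 0 \<in> edom fs"
    and zb_argmin: "\<forall>k v. ereal ((- G k) \<bullet> zb k) + fs (zb k) \<le> ereal ((- G k) \<bullet> v) + fs v"
    and z_step: "\<forall>k. z (Suc k) = \<eta> *\<^sub>R zb k + (1 - \<eta>) *\<^sub>R z k"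
  shows "\<forall>k. real k \<ge> (1 + 2 * M * L / \<epsilon>) *
             ln (1 + 2 * (1 + 2 * M * L / \<epsilon>) * real_of_ereal (\<psi> (z 0) - (INF v. \<psi> v)) / \<epsilon>)
           \<longrightarrow> \<psi> (z k) - (INF v. \<Gamma> k v) \<le> ereal (\<epsilon> / 2)"
proof -
  have \<alpha>_pos: "\<alpha> > 0" unfolding \<alpha>_def using eps_pos M_pos by simp
  have \<eta>0: "0 < \<eta>" "\<eta> < 1" unfolding \<eta>_def using \<alpha>_pos L_pos by (auto simp: field_simps)
  have wM: "\<forall>x\<in>edom h. w x \<le> ereal M" using M_max by blast
  obtain phi xm where
    P1: "\<forall>y. conj (\<lambda>x. h x + ereal \<alpha> * w x) y = ereal (phi y)" and
    P2: "\<forall>y. (phi has_derivative (\<lambda>d. xm y \<bullet> d)) (at y)" and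
    P3: "\<forall>y y'. phi y + (y' - y) \<bullet> xm y \<le> phi y'" and
    P4: "\<forall>y y'. phi y' \<le> phi y + (y' - y) \<bullet> xm y + (dual_norm N (y' - y))\<^sup>2 / (2 * \<alpha>)" and
    P5: "\<exists>x0 c. \<forall>y. y \<bullet> x0 - c \<le> phi y"
    using conj_analysis_ctx[OF norm h_closed h_proper h_convex h_bdd w_nonneg w_closed w_sc wM \<alpha>_pos] by blast
  have cphi: "\<And>y. conj h\<alpha> y = ereal (phi y)" using P1 unfolding h\<alpha>_def by simp
  have Gk: "\<And>k. G k = xm (- z k)"
  proof -
    fix k
    have "(\<lambda>u. real_of_ereal (conj h\<alpha> u)) = phi" using cphi by simp
    moreover have "grad phi (- z k) = xm (- z k)" by (rule grad_unique) (use P2 in blast)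
    ultimately show "G k = xm (- z k)" unfolding G_def by simp
  qed
  have fs_ge: "ereal (v \<bullet> x - f x) \<le> fs v" for v x
    unfolding fs_def conj_def by (rule SUP_upper2[of x]) simp_all
  have fs_nm: "fs v \<noteq> -\<infinity>" for v
  proof -
    have "ereal (v \<bullet> 0 - f 0) \<le> fs v" by (rule fs_ge)
    then show ?thesis by auto
  qed
  have fin: "\<And>v. fs v < \<infinity> \<Longrightarrow> fs v = ereal (real_of_ereal (fs v))"
  proof -
    fix v assume "fs v < \<infinity>"
    then show "fs v = ereal (real_of_ereal (fs v))" using fs_nm[of v] by (cases "fs v") auto
  qed
  have fs_sc': "fs (t *\<^sub>R s1 + (1 - t) *\<^sub>R s2)
     \<le> ereal (t * F1 + (1 - t) * F2 - t * (1 - t) / (2 * L) * (dual_norm N (s1 - s2))\<^sup>2)"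
    if "fs s1 = ereal F1" "fs s2 = ereal F2" "0 \<le> t" "t \<le> 1" for s1 s2 F1 F2 t
    using fs_sc[OF norm f_diff f_smooth L_pos, of s1 F1 s2 F2 t] that unfolding fs_def by blast
  have zbfin: "fs (zb k) < \<infinity>" if zk: "fs (z k) < \<infinity>" for k
  proof (rule ccontr)
    assume "\<not> fs (zb k) < \<infinity>"
    then have "fs (zb k) = \<infinity>" by simp
    then have "ereal ((- G k) \<bullet> zb k) + fs (zb k) = \<infinity>" by simp
    moreover have "ereal ((- G k) \<bullet> z k) + fs (z k) = ereal ((- G k) \<bullet> z k + real_of_ereal (fs (z k)))"
      by (subst fin[OF zk]) simp
    moreover have "ereal ((- G k) \<bullet> zb k) + fs (zb k) \<le> ereal ((- G k) \<bullet> z k) + fs (z k)"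
      using zb_argmin by blast
    ultimately show False by simp
  qed
  have zfin: "fs (z k) < \<infinity>" for k
  proof (induction k)
    case 0 then show ?case using z0 unfolding edom_def by simp
  next
    case (Suc k)
    have "fs (z (Suc k)) \<le> ereal (\<eta> * real_of_ereal (fs (zb k)) + (1 - \<eta>) * real_of_ereal (fs (z k))
          - \<eta> * (1 - \<eta>) / (2 * L) * (dual_norm N (zb k - z k))\<^sup>2)"
      unfolding z_step[rule_format] by (rule fs_sc'[OF fin[OF zbfin[OF Suc]] fin[OF Suc]]) (use \<eta>0 in auto)
    then show ?case by (rule le_less_trans) simp
  qed
  define Fz where "Fz k = real_of_ereal (fs (z k))" for k
  define Fb where "Fb k = real_of_ereal (fs (zb k))" for k
  have Fz: "fs (z k) = ereal (Fz k)" for k unfolding Fz_def by (rule fin[OF zfin])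
  have Fb: "fs (zb k) = ereal (Fb k)" for k unfolding Fb_def by (rule fin[OF zbfin[OF zfin]])
  define D where "D k = dual_norm N (zb k - z k)" for k
  define ps where "ps k = phi (- z k) + Fz k" for k
  define gap where "gap k = Fz k - Fb k + G k \<bullet> (zb k - z k)" for k
  define gb where "gb k = phi (- z k) + (- G k) \<bullet> (zb k - z k) + Fb k" for k
  have psi_z: "\<psi> (z k) = ereal (ps k)" for k unfolding \<psi>_def ps_def using cphi Fz by simp
  have psi_v: "\<psi> v = ereal (phi (- v)) + fs v" for v unfolding \<psi>_def using cphi by simp
  have Gam: "\<Gamma> k v = ereal (phi (- z k) + (- G k) \<bullet> (v - z k)) + fs v" for k v
    unfolding \<Gamma>_def cphi by simp
  have INFG: "(INF v. \<Gamma> k v) = ereal (gb k)" for k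
  proof -
    have le: "\<Gamma> k (zb k) \<le> \<Gamma> k v" for v
    proof (cases "fs v = \<infinity>")
      case True then show ?thesis unfolding Gam by simp
    next
      case False
      then have "fs v < \<infinity>" by (simp add: top.not_eq_extremum)
      then have fv: "fs v = ereal (real_of_ereal (fs v))" by (rule fin)
      have "ereal ((- G k) \<bullet> zb k) + ereal (Fb k) \<le> ereal ((- G k) \<bullet> v) + ereal (real_of_ereal (fs v))"
        using zb_argmin[rule_format, of k v] unfolding Fb[symmetric] fv[symmetric] .
      then have "(- G k) \<bullet> zb k + Fb k \<le> (- G k) \<bullet> v + real_of_ereal (fs v)" by simp
      then have "phi (- z k) + (- G k) \<bullet> (zb k - z k) + Fb k \<le> phi (- z k) + (- G k) \<bullet> (v - z k) + real_of_ereal (fs v)"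
        by (simp add: inner_diff_right)
      then show ?thesis unfolding Gam Fb by (subst fv) simp
    qed
    have "(INF v. \<Gamma> k v) = \<Gamma> k (zb k)"
      by (rule antisym) (auto intro: INF_lower INF_greatest le)
    also have "\<dots> = ereal (gb k)" unfolding Gam Fb gb_def by simp
    finally show ?thesis .
  qed
  have Gle: "\<Gamma> k v \<le> \<psi> v" for k v
  proof -
    have "phi (- z k) + (- v - - z k) \<bullet> xm (- z k) \<le> phi (- v)" using P3 by blast
    then have "phi (- z k) + (- G k) \<bullet> (v - z k) \<le> phi (- v)" unfolding Gk by (simp add: inner_diff_left inner_diff_right inner_commute)
    then show ?thesis unfolding Gam psi_v by (intro add_right_mono) simp
  qed
  obtain x0 c where x0c: "\<forall>y. y \<bullet> x0 - c \<le> phi y" using P5 by blast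
  have psi_lb: "ereal (- c - f x0) \<le> \<psi> v" for v
  proof -
    have "ereal (- c - f x0) = ereal ((- v) \<bullet> x0 - c) + ereal (v \<bullet> x0 - f x0)" by simp
    also have "\<dots> \<le> ereal (phi (- v)) + fs v"
    proof (rule add_mono)
      show "ereal ((- v) \<bullet> x0 - c) \<le> ereal (phi (- v))" using x0c[rule_format, of "- v"] by simp
      show "ereal (v \<bullet> x0 - f x0) \<le> fs v" by (rule fs_ge)
    qed
    finally show ?thesis unfolding psi_v .
  qed
  define pstar where "pstar = real_of_ereal (INF v. \<psi> v)"
  have INFpsi: "(INF v. \<psi> v) = ereal pstar"
  proof -
    have "ereal (- c - f x0) \<le> (INF v. \<psi> v)" using psi_lb by (rule INF_greatest)
    moreover have "(INF v. \<psi> v) \<le> ereal (ps 0)" using INF_lower[of "z 0" UNIV \<psi>] psi_z by simp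
    ultimately show ?thesis unfolding pstar_def by (cases "INF v. \<psi> v") auto
  qed
  have pst_ps: "pstar \<le> ps k" for k
    using INF_lower[of "z k" UNIV \<psi>] INFpsi psi_z by simp
  have gap_ge: "ps k - pstar \<le> gap k" for k
  proof -
    have "(INF v. \<Gamma> k v) \<le> (INF v. \<psi> v)" using Gle by (intro INF_mono) blast
    then have "gb k \<le> pstar" using INFG INFpsi by simp
    moreover have "gap k = ps k - gb k" unfolding gap_def ps_def gb_def by (simp add: inner_minus_left)
    ultimately show ?thesis by simp
  qed
  have ca: "\<eta> / \<alpha> = 1 / (L + \<alpha>)" unfolding \<eta>_def using \<alpha>_pos L_pos add_pos_pos[OF mult_pos_pos[OF L_pos \<alpha>_pos] mult_pos_pos[OF \<alpha>_pos \<alpha>_pos]] by (simp add: field_simps)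
  have cb: "(1 - \<eta>) / L = 1 / (L + \<alpha>)" unfolding \<eta>_def using \<alpha>_pos L_pos add_pos_pos[OF mult_pos_pos[OF L_pos L_pos] mult_pos_pos[OF L_pos \<alpha>_pos]] by (simp add: field_simps)
  have coef: "\<eta>\<^sup>2 / (2 * \<alpha>) = \<eta> * (1 - \<eta>) / (2 * L)"
  proof -
    have "\<eta>\<^sup>2 / (2 * \<alpha>) = \<eta> * (\<eta> / \<alpha>) / 2" by (simp add: power2_eq_square)
    also have "\<dots> = \<eta> * ((1 - \<eta>) / L) / 2" using ca cb by simp
    also have "\<dots> = \<eta> * (1 - \<eta>) / (2 * L)" by simp
    finally show ?thesis .
  qed
  have desc: "ps (Suc k) \<le> ps k - \<eta> * gap k" for k
  proof -
    have dz: "- z (Suc k) - - z k = - (\<eta> *\<^sub>R (zb k - z k))"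
      unfolding z_step[rule_format] by (simp add: algebra_simps)
    have dd: "dual_norm N (- z (Suc k) - - z k) = \<eta> * D k"
      unfolding dz D_def using dual_neg[OF norm] dual_scale[OF norm] \<eta>0 by simp
    have dd2: "dual_norm N (- (\<eta> *\<^sub>R (zb k - z k))) = \<eta> * D k" using dd unfolding dz .
    have "phi (- z (Suc k)) \<le> phi (- z k) + (- z (Suc k) - - z k) \<bullet> xm (- z k) + (dual_norm N (- z (Suc k) - - z k))\<^sup>2 / (2 * \<alpha>)"
      using P4 by blast
    also have "\<dots> = phi (- z k) - \<eta> * (G k \<bullet> (zb k - z k)) + \<eta>\<^sup>2 / (2 * \<alpha>) * (D k)\<^sup>2"
      unfolding dd dz Gk using dd2 by (simp add: inner_commute power_mult_distrib)
    finally have ph: "phi (- z (Suc k)) \<le> phi (- z k) - \<eta> * (G k \<bullet> (zb k - z k)) + \<eta> * (1 - \<eta>) / (2 * L) * (D k)\<^sup>2"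
      unfolding coef .
    have "ereal (Fz (Suc k)) \<le> ereal (\<eta> * Fb k + (1 - \<eta>) * Fz k - \<eta> * (1 - \<eta>) / (2 * L) * (D k)\<^sup>2)"
      unfolding Fz[symmetric] z_step[rule_format] D_def by (rule fs_sc'[OF Fb Fz]) (use \<eta>0 in auto)
    then have fz: "Fz (Suc k) \<le> \<eta> * Fb k + (1 - \<eta>) * Fz k - \<eta> * (1 - \<eta>) / (2 * L) * (D k)\<^sup>2" by simp
    have "ps (Suc k) \<le> phi (- z k) - \<eta> * (G k \<bullet> (zb k - z k)) + \<eta> * Fb k + (1 - \<eta>) * Fz k"
      unfolding ps_def using ph fz by linarith
    also have "\<dots> = ps k - \<eta> * gap k" unfolding ps_def gap_def by (simp add: algebra_simps)
    finally show ?thesis .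
  qed
  have gapk: "gap k \<le> (1 - \<eta>) ^ k * (ps 0 - pstar) / \<eta>" for k
    using recur[of \<eta> "\<lambda>k. ps k - pstar" gap k] \<eta>0 pst_ps gap_ge desc by simp
  have Q: "1 + 2 * M * L / \<epsilon> = 1 / \<eta>"
    unfolding \<eta>_def \<alpha>_def using eps_pos M_pos L_pos by (simp add: field_simps)
  have e0: "real_of_ereal (\<psi> (z 0) - (INF v. \<psi> v)) = ps 0 - pstar" unfolding psi_z INFpsi by simp
  show ?thesis
  proof (intro allI impI)
    fix k :: nat
    assume k: "(1 + 2 * M * L / \<epsilon>) *
             ln (1 + 2 * (1 + 2 * M * L / \<epsilon>) * real_of_ereal (\<psi> (z 0) - (INF v. \<psi> v)) / \<epsilon>) \<le> real k"
    have "gap k \<le> \<epsilon> / 2"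
      by (rule final_num[OF \<eta>0 _ eps_pos gapk]) (use k pst_ps[of 0] in \<open>simp_all only: Q e0\<close>)
    moreover have "\<psi> (z k) - (INF v. \<Gamma> k v) = ereal (gap k)"
      unfolding psi_z INFG gap_def ps_def gb_def by (simp add: inner_minus_left)
    ultimately show "\<psi> (z k) - (INF v. \<Gamma> k v) \<le> ereal (\<epsilon> / 2)" by simp
  qed
qed



end
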